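(* Let $(X,Y)$ be a minimum $s$-$t$ cut in the flow network $G_N$. Then $A \cap X$ is an optimal seed set, i.e. $\pi(A \cap X) \ge \pi(S)$ for every seed set $S$.
   Context: Let $G=(V,E)$ be a finite undirected graph whose vertices are agents. Each agent $i$ has a criticality parameter $\theta_i \in [0,1]$, and the product has a parameter $\phi \in [0,1]$. Agent $i$ is accepting if $\theta_i \le \phi$ and rejecting if $\theta_i > \phi$. A seed set is a set $S \subseteq V$ of accepting agents. $V(S)$ denotes the set of agents $i$ for which there exist $j \in S$ and a path in $G$ from $i$ to $j$ all of whose internal vertices are accepting (paths of length $0$ allowed, so $S \subseteq V(S)$). $V^+(S)$ is the set of accepting agents in $V(S)$ and $V^-(S)$ the set of rejecting agents in $V(S)$. Given constants $p, q > 0$, the payoff of a seed set $S$ is $\pi(S) = p\,|V^+(S)| - q\,|V^-(S)|$; an optimal seed set is a seed set maximizing $\pi$ over all seed sets. For an accepting agent $i$, the cluster of $i$ is $C_i = V(\{i\})$, its interior is $C_i^o = V^+(\{i\})$, and its boundary is $C_i^b = V^-(\{i\})$. Flow network $G_N$: let $C_1,\dots,C_k$ be the distinct sets of the form $C_i$ ($i$ accepting); their interiors are pairwise disjoint. For each $m$ choose one canonical accepting agent $a_m \in C_m^o$, and let $A = \{a_1,\dots,a_k\}$. Let $R = \bigcup_{m} C_m^b$. The directed network $G_N$ has vertex set $\{s,t\} \cup A \cup R$, an edge $s \to a_m$ of capacity $p\,|C_m^o|$ for each $m$, an edge $r \to t$ of capacity $q$ for each $r \in R$, and an edge $a_m \to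 r$ of infinite capacity whenever $r \in C_m^b$. An $s$-$t$ cut $(X,Y)$ is a partition of the vertex set with $s \in X$, $t \in Y$; its value is the total capacity of edges from $X$ to $Y$, and a minimum cut is one of minimum value. *)

theory Defs
  imports Main "HOL-Library.Extended_Real"
begin

text \<open>Agents are vertices of a finite undirected graph with vertex set V and
  symmetric adjacency relation E. theta is the criticality function, phi the product parameter.\<close>

definition accepting :: "('a \<Rightarrow> real) \<Rightarrow> real \<Rightarrow> 'a \<Rightarrow> bool" where
  "accepting \<theta> \<phi> i \<longleftrightarrow> \<theta> i \<le> \<phi>"

definition is_path :: "'a set \<Rightarrow> ('a \<Rightarrow> 'a \<Rightarrow> bool) \<Rightarrow> 'a \<Rightarrow> 'a \<Rightarrow> 'a list \<Rightarrow> bool" where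
  "is_path V E i j xs \<longleftrightarrow> xs \<noteq> [] \<and> hd xs = i \<and> last xs = j \<and> set xs \<subseteq> V \<and>
     (\<forall>k. Suc k < length xs \<longrightarrow> E (xs ! k) (xs ! Suc k))"

definition seed_set :: "'a set \<Rightarrow> ('a \<Rightarrow> real) \<Rightarrow> real \<Rightarrow> 'a set \<Rightarrow> bool" where
  "seed_set V \<theta> \<phi> S \<longleftrightarrow> S \<subseteq> V \<and> (\<forall>i\<in>S. accepting \<theta> \<phi> i)"

definition reached :: "'a set \<Rightarrow> ('a \<Rightarrow> 'a \<Rightarrow> bool) \<Rightarrow> ('a \<Rightarrow> real) \<Rightarrow> real \<Rightarrow> 'a set \<Rightarrow> 'a set" where
  "reached V E \<theta> \<phi> S = {i\<in>V. \<exists>j\<in>S. \<exists>xs. is_path V E i j xs \<and>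
      (\<forall>v\<in>set (butlast (tl xs)). accepting \<theta> \<phi> v)}"

definition reached_pos :: "'a set \<Rightarrow> ('a \<Rightarrow> 'a \<Rightarrow> bool) \<Rightarrow> ('a \<Rightarrow> real) \<Rightarrow> real \<Rightarrow> 'a set \<Rightarrow> 'a set" where
  "reached_pos V E \<theta> \<phi> S = {i \<in> reached V E \<theta> \<phi> S. accepting \<theta> \<phi> i}"

definition reached_neg :: "'a set \<Rightarrow> ('a \<Rightarrow> 'a \<Rightarrow> bool) \<Rightarrow> ('a \<Rightarrow> real) \<Rightarrow> real \<Rightarrow> 'a set \<Rightarrow> 'a set" where
  "reached_neg V E \<theta> \<phi> S = {i \<in> reached V E \<theta> \<phi> S. \<not> accepting \<theta> \<phi> i}"

definition payoff :: "'a set \<Rightarrow> ('a \<Rightarrow> 'a \<Rightarrow> bool) \<Rightarrow> ('a \<Rightarrow> real) \<Rightarrow> real \<Rightarrow> real \<Rightarrow> real \<Rightarrow> 'a set \<Rightarrow> real" where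
  "payoff V E \<theta> \<phi> p q S =
     p * real (card (reached_pos V E \<theta> \<phi> S)) - q * real (card (reached_neg V E \<theta> \<phi> S))"

definition optimal_seed_set :: "'a set \<Rightarrow> ('a \<Rightarrow> 'a \<Rightarrow> bool) \<Rightarrow> ('a \<Rightarrow> real) \<Rightarrow> real \<Rightarrow> real \<Rightarrow> real \<Rightarrow> 'a set \<Rightarrow> bool" where
  "optimal_seed_set V E \<theta> \<phi> p q S \<longleftrightarrow> seed_set V \<theta> \<phi> S \<and>
     (\<forall>S'. seed_set V \<theta> \<phi> S' \<longrightarrow> payoff V E \<theta> \<phi> p q S' \<le> payoff V E \<theta> \<phi> p q S)"

definition cluster :: "'a set \<Rightarrow> ('a \<Rightarrow> 'a \<Rightarrow> bool) \<Rightarrow> ('a \<Rightarrow> real) \<Rightarrow> real \<Rightarrow> 'a \<Rightarrow> 'a set" where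
  "cluster V E \<theta> \<phi> i = reached V E \<theta> \<phi> {i}"

definition interior :: "'a set \<Rightarrow> ('a \<Rightarrow> 'a \<Rightarrow> bool) \<Rightarrow> ('a \<Rightarrow> real) \<Rightarrow> real \<Rightarrow> 'a \<Rightarrow> 'a set" where
  "interior V E \<theta> \<phi> i = reached_pos V E \<theta> \<phi> {i}"

definition boundary :: "'a set \<Rightarrow> ('a \<Rightarrow> 'a \<Rightarrow> bool) \<Rightarrow> ('a \<Rightarrow> real) \<Rightarrow> real \<Rightarrow> 'a \<Rightarrow> 'a set" where
  "boundary V E \<theta> \<phi> i = reached_neg V E \<theta> \<phi> {i}"

definition canonical_reps :: "'a set \<Rightarrow> ('a \<Rightarrow> 'a \<Rightarrow> bool) \<Rightarrow> ('a \<Rightarrow> real) \<Rightarrow> real \<Rightarrow> 'a set \<Rightarrow> bool" where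
  "canonical_reps V E \<theta> \<phi> A \<longleftrightarrow> A \<subseteq> {i\<in>V. accepting \<theta> \<phi> i} \<and>
     (\<forall>i\<in>V. accepting \<theta> \<phi> i \<longrightarrow> (\<exists>!a. a \<in> A \<and> cluster V E \<theta> \<phi> a = cluster V E \<theta> \<phi> i))"

definition Rset :: "'a set \<Rightarrow> ('a \<Rightarrow> 'a \<Rightarrow> bool) \<Rightarrow> ('a \<Rightarrow> real) \<Rightarrow> real \<Rightarrow> 'a set" where
  "Rset V E \<theta> \<phi> = (\<Union>i\<in>{i\<in>V. accepting \<theta> \<phi> i}. boundary V E \<theta> \<phi> i)"

datatype 'a fnode = Src | Snk | Ag 'a

definition net_nodes :: "'a set \<Rightarrow> ('a \<Rightarrow> 'a \<Rightarrow> bool) \<Rightarrow> ('a \<Rightarrow> real) \<Rightarrow> real \<Rightarrow> 'a set \<Rightarrow> 'a fnode set" where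
  "net_nodes V E \<theta> \<phi> A = {Src, Snk} \<union> Ag ` A \<union> Ag ` Rset V E \<theta> \<phi>"

text \<open>Capacity of the directed edge u -> v in G_N (0 if there is no such edge).\<close>
fun net_cap :: "'a set \<Rightarrow> ('a \<Rightarrow> 'a \<Rightarrow> bool) \<Rightarrow> ('a \<Rightarrow> real) \<Rightarrow> real \<Rightarrow> real \<Rightarrow> real \<Rightarrow> 'a set
    \<Rightarrow> 'a fnode \<Rightarrow> 'a fnode \<Rightarrow> ereal" where
  "net_cap V E \<theta> \<phi> p q A Src (Ag a) =
     (if a \<in> A then ereal (p * real (card (interior V E \<theta> \<phi> a))) else 0)"
| "net_cap V E \<theta> \<phi> p q A (Ag r) Snk = (if r \<in> Rset V E \<theta> \<phi> then ereal q else 0)"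
| "net_cap V E \<theta> \<phi> p q A (Ag a) (Ag r) =
     (if a \<in> A \<and> r \<in> boundary V E \<theta> \<phi> a then \<infinity> else 0)"
| "net_cap V E \<theta> \<phi> p q A u v = 0"

definition is_st_cut :: "'a set \<Rightarrow> ('a \<Rightarrow> 'a \<Rightarrow> bool) \<Rightarrow> ('a \<Rightarrow> real) \<Rightarrow> real \<Rightarrow> 'a set \<Rightarrow> 'a fnode set \<Rightarrow> bool" where
  "is_st_cut V E \<theta> \<phi> A X \<longleftrightarrow> X \<subseteq> net_nodes V E \<theta> \<phi> A \<and> Src \<in> X \<and> Snk \<notin> X"

definition cut_value :: "'a set \<Rightarrow> ('a \<Rightarrow> 'a \<Rightarrow> bool) \<Rightarrow> ('a \<Rightarrow> real) \<Rightarrow> real \<Rightarrow> real \<Rightarrow> real \<Rightarrow> 'a set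
    \<Rightarrow> 'a fnode set \<Rightarrow> ereal" where
  "cut_value V E \<theta> \<phi> p q A X =
     (\<Sum>u\<in>X. \<Sum>v\<in>net_nodes V E \<theta> \<phi> A - X. net_cap V E \<theta> \<phi> p q A u v)"

definition is_min_cut :: "'a set \<Rightarrow> ('a \<Rightarrow> 'a \<Rightarrow> bool) \<Rightarrow> ('a \<Rightarrow> real) \<Rightarrow> real \<Rightarrow> real \<Rightarrow> real \<Rightarrow> 'a set
    \<Rightarrow> 'a fnode set \<Rightarrow> bool" where
  "is_min_cut V E \<theta> \<phi> p q A X \<longleftrightarrow> is_st_cut V E \<theta> \<phi> A X \<and>
     (\<forall>X'. is_st_cut V E \<theta> \<phi> A X' \<longrightarrow> cut_value V E \<theta> \<phi> p q A X \<le> cut_value V E \<theta> \<phi> p q A X')"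

end

theory Submission
  imports Defs
begin


lemma is_path_succ: "is_path V E i j xs \<longleftrightarrow> xs \<noteq> [] \<and> hd xs = i \<and> last xs = j \<and> set xs \<subseteq> V \<and> successively E xs"
  unfolding is_path_def successively_conv_nth by blast

lemma set_bt_rev: "set (butlast (tl (rev xs))) = set (butlast (tl xs))"
proof -
  have "butlast (tl (rev xs)) = rev (butlast (tl xs))"
  proof -
    have tr: "tl (rev ys) = rev (butlast ys)" for ys :: "'a list"
      using butlast_rev[of "rev ys"] by simp
    show ?thesis by (simp only: butlast_tl butlast_rev tr)
  qed
  then show ?thesis by simp
qed

lemma path_rev:
  assumes "\<And>u v. E u v \<Longrightarrow> E v u" "is_path V E i j xs"
  shows "is_path V E j i (rev xs)"
proof -
  have "successively E xs" using assms(2) by (simp add: is_path_succ)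
  then have "successively (\<lambda>x y. E y x) xs" by (rule successively_mono) (use assms(1) in blast)
  then show ?thesis using assms(2) by (auto simp: is_path_succ hd_rev last_rev)
qed

lemma path_app:
  assumes "is_path V E i j xs" "is_path V E j k ys"
  shows "is_path V E i k (xs @ tl ys) \<and>
     set (butlast (tl (xs @ tl ys))) \<subseteq> set (butlast (tl xs)) \<union> {j} \<union> set (butlast (tl ys))"
proof (cases "tl ys = []")
  case True
  then have "ys = [j]" using assms(2) unfolding is_path_succ
    by (metis hd_Cons_tl)
  then show ?thesis using assms by (auto simp: is_path_succ)
next
  case False
  obtain ys' where ys: "ys = j # ys'" using assms(2) unfolding is_path_succ
    by (metis hd_Cons_tl)
  have ne: "ys' \<noteq> []" using False ys by simp
  have s1: "successively E xs" "successively E ys" using assms by (auto simp: is_path_succ)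
  have "successively E ys'" "E j (hd ys')" using s1(2) ne ys by (auto simp: successively_Cons)
  moreover have "last xs = j" "xs \<noteq> []" using assms(1) by (auto simp: is_path_succ)
  ultimately have "successively E (xs @ ys')" using s1(1) by (auto simp: successively_append_iff)
  moreover have "set (butlast (tl (xs @ ys'))) \<subseteq> set (butlast (tl xs)) \<union> {j} \<union> set (butlast ys')"
  proof (cases "tl xs = []")
    case True
    then show ?thesis using \<open>xs \<noteq> []\<close> by auto
  next
    case F: False
    have "tl (xs @ ys') = tl xs @ ys'" using \<open>xs \<noteq> []\<close> by simp
    then have e1: "butlast (tl (xs @ ys')) = tl xs @ butlast ys'" using ne by (simp add: butlast_append)
    have e2: "tl xs = butlast (tl xs) @ [j]" using F \<open>last xs = j\<close> \<open>xs \<noteq> []\<close>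
      by (metis append_butlast_last_id last_tl)
    have e3: "set (tl xs) = set (butlast (tl xs)) \<union> {j}"
      by (subst e2) simp
    show ?thesis unfolding e1 using e3 by auto
  qed
  ultimately show ?thesis using assms ys ne by (auto simp: is_path_succ last_append)
qed




locale net =
  fixes V :: "'a set" and E :: "'a \<Rightarrow> 'a \<Rightarrow> bool" and \<theta> :: "'a \<Rightarrow> real"
    and \<phi> p q :: real and A :: "'a set"
  assumes finV: "finite V"
    and Esym: "\<And>u v. E u v \<Longrightarrow> E v u"
    and pp: "p > 0" and qp: "q > 0"
    and canon: "canonical_reps V E \<theta> \<phi> A"
begin

abbreviation "acc \<equiv> accepting \<theta> \<phi>"
abbreviation "Rch \<equiv> reached V E \<theta> \<phi>"

lemma Rch_UN: "Rch S = (\<Union>j\<in>S. Rch {j})"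
  unfolding reached_def by auto

lemma Rch_V: "Rch S \<subseteq> V"
  unfolding reached_def by auto

lemma Rch_self: "i \<in> V \<Longrightarrow> i \<in> Rch {i}"
  unfolding reached_def by (rule CollectI, simp, rule exI[of _ "[i]"]) (simp add: is_path_def)

lemma Rch_sym: assumes "x \<in> Rch {y}" shows "y \<in> Rch {x}"
proof -
  obtain xs where xs: "is_path V E x y xs" "\<forall>v\<in>set (butlast (tl xs)). acc v"
    using assms unfolding reached_def by auto
  have "y \<in> V" using xs(1) unfolding is_path_def by (metis last_in_set subsetD)
  moreover have "is_path V E y x (rev xs)" using path_rev[OF _ xs(1)] Esym by blast
  ultimately show ?thesis using xs(2) unfolding reached_def by (auto simp: set_bt_rev)
qed

lemma Rch_trans: assumes "acc x" "w \<in> Rch {x}" "x \<in> Rch {y}" shows "w \<in> Rch {y}"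
proof -
  obtain xs where xs: "is_path V E w x xs" "\<forall>v\<in>set (butlast (tl xs)). acc v" "w \<in> V"
    using assms unfolding reached_def by auto
  obtain ys where ys: "is_path V E x y ys" "\<forall>v\<in>set (butlast (tl ys)). acc v"
    using assms unfolding reached_def by auto
  from path_app[OF xs(1) ys(1)] show ?thesis using xs ys assms(1) unfolding reached_def by blast
qed

lemma Rch_eq: assumes "acc a" "acc b" "a \<in> Rch {b}" shows "Rch {a} = Rch {b}"
  using Rch_trans[OF assms(1) _ assms(3)] Rch_trans[OF assms(2) _ Rch_sym[OF assms(3)]] by blast

lemma A_sub: "A \<subseteq> V" "\<And>a. a \<in> A \<Longrightarrow> acc a"
  using canon unfolding canonical_reps_def by auto

lemma A_uniq: assumes "a \<in> A" "b \<in> A" "Rch {a} = Rch {b}" shows "a = b"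
proof -
  have "\<exists>!c. c \<in> A \<and> cluster V E \<theta> \<phi> c = cluster V E \<theta> \<phi> a"
    using canon assms(1) A_sub unfolding canonical_reps_def by blast
  then show ?thesis using assms unfolding cluster_def by metis
qed

lemma A_disj: assumes "a \<in> A" "b \<in> A" "x \<in> Rch {a}" "x \<in> Rch {b}" "acc x" shows "a = b"
proof -
  have "Rch {a} = Rch {x}" using Rch_eq[OF A_sub(2)[OF assms(1)] assms(5) Rch_sym[OF assms(3)]] .
  moreover have "Rch {b} = Rch {x}" using Rch_eq[OF A_sub(2)[OF assms(2)] assms(5) Rch_sym[OF assms(4)]] .
  ultimately show ?thesis using A_uniq assms by simp
qed

definition rep where "rep j = (SOME a. a \<in> A \<and> Rch {a} = Rch {j})"

lemma rep: assumes "j \<in> V" "acc j" shows "rep j \<in> A" "Rch {rep j} = Rch {j}"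
proof -
  have "\<exists>a. a \<in> A \<and> Rch {a} = Rch {j}"
    using canon assms unfolding canonical_reps_def cluster_def by blast
  then show "rep j \<in> A" "Rch {rep j} = Rch {j}" unfolding rep_def by (metis (mono_tags, lifting) someI_ex)+
qed

lemma payoff_rep: assumes "seed_set V \<theta> \<phi> S"
  shows "payoff V E \<theta> \<phi> p q S = payoff V E \<theta> \<phi> p q (rep ` S)" "rep ` S \<subseteq> A"
proof -
  have e: "(\<Union>j\<in>S. Rch {j}) = (\<Union>j\<in>S. Rch {rep j})"
    using assms rep unfolding seed_set_def by (intro SUP_cong) auto
  have "Rch S = Rch (rep ` S)"
    using e Rch_UN[of S] Rch_UN[of "rep ` S"] by simp
  then show "payoff V E \<theta> \<phi> p q S = payoff V E \<theta> \<phi> p q (rep ` S)"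
    unfolding payoff_def reached_pos_def reached_neg_def by simp
  show "rep ` S \<subseteq> A" using assms rep unfolding seed_set_def by auto
qed

definition Bd where "Bd T = (\<Union>a\<in>T. boundary V E \<theta> \<phi> a)"

lemma finA: "finite A" using A_sub finV finite_subset by blast

lemma payoff_A: assumes "T \<subseteq> A"
  shows "payoff V E \<theta> \<phi> p q T = p * (\<Sum>a\<in>T. real (card (interior V E \<theta> \<phi> a))) - q * real (card (Bd T))"
proof -
  have "reached_pos V E \<theta> \<phi> T = (\<Union>a\<in>T. interior V E \<theta> \<phi> a)"
    unfolding reached_pos_def interior_def by (subst Rch_UN) auto
  moreover have "card (\<Union>a\<in>T. interior V E \<theta> \<phi> a) = (\<Sum>a\<in>T. card (interior V E \<theta> \<phi> a))"
  proof (rule card_UN_disjoint)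
    show "finite T" using assms finA finite_subset by blast
    show "\<forall>i\<in>T. finite (interior V E \<theta> \<phi> i)"
      unfolding interior_def reached_pos_def using Rch_V finV finite_subset by fastforce
    show "\<forall>i\<in>T. \<forall>j\<in>T. i \<noteq> j \<longrightarrow> interior V E \<theta> \<phi> i \<inter> interior V E \<theta> \<phi> j = {}"
      unfolding interior_def reached_pos_def using A_disj assms by blast
  qed
  moreover have "reached_neg V E \<theta> \<phi> T = Bd T"
    unfolding reached_neg_def Bd_def boundary_def by (subst Rch_UN) auto
  ultimately show ?thesis unfolding payoff_def by simp
qed

end



context net begin

abbreviation "N \<equiv> net_nodes V E \<theta> \<phi> A"
abbreviation "c \<equiv> net_cap V E \<theta> \<phi> p q A"
abbreviation "Rs \<equiv> Rset V E \<theta> \<phi>"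
abbreviation "val \<equiv> cut_value V E \<theta> \<phi> p q A"

lemma Rs_props: "r \<in> Rs \<Longrightarrow> r \<in> V \<and> \<not> acc r"
  unfolding Rset_def boundary_def reached_neg_def using Rch_V[of "{_}"] by auto

lemma bd_Rs: "a \<in> A \<Longrightarrow> boundary V E \<theta> \<phi> a \<subseteq> Rs"
  unfolding Rset_def using A_sub by auto

lemma Bd_Rs: "T \<subseteq> A \<Longrightarrow> Bd T \<subseteq> Rs"
  unfolding Bd_def using bd_Rs by auto

lemma A_Rs: "a \<in> A \<Longrightarrow> a \<notin> Rs"
  using A_sub Rs_props by auto

lemma finRs: "finite Rs" by (meson Rs_props finV finite_subset subsetI)

lemma finN: "finite N"
  unfolding net_nodes_def using finA finRs by simp

lemma cap_nn: "0 \<le> c u v"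
  using pp qp by (cases u; cases v) auto

lemma row_nn: "0 \<le> (\<Sum>v\<in>Y. c u v)"
  by (rule sum_nonneg) (rule cap_nn)

lemma val_split: "val X = (\<Sum>u\<in>X. \<Sum>v\<in>N - X. c u v)"
  unfolding cut_value_def by simp

lemma cutT:
  assumes "T \<subseteq> A"
  defines "X' \<equiv> insert Src (Ag ` T \<union> Ag ` Bd T)"
  shows "is_st_cut V E \<theta> \<phi> A X'"
    and "val X' = ereal (\<Sum>a\<in>A - T. p * real (card (interior V E \<theta> \<phi> a))) + ereal (q * real (card (Bd T)))"
proof -
  show "is_st_cut V E \<theta> \<phi> A X'"
    unfolding is_st_cut_def X'_def net_nodes_def using assms(1) Bd_Rs[OF assms(1)] by auto
  have finY: "finite (N - X')" using finN by simp
  have fT: "finite T" using assms(1) finA finite_subset by auto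
  have fB: "finite (Bd T)" using Bd_Rs[OF assms(1)] finRs finite_subset by auto
  have BdA: "x \<in> Bd T \<Longrightarrow> x \<notin> A" for x using Bd_Rs[OF assms(1)] A_Rs by auto
  have row_src: "(\<Sum>v\<in>N - X'. c Src v) = ereal (\<Sum>a\<in>A - T. p * real (card (interior V E \<theta> \<phi> a)))"
  proof -
    have "(\<Sum>v\<in>N - X'. c Src v) = (\<Sum>v\<in>Ag ` (A - T). c Src v)"
    proof (rule sum.mono_neutral_right[OF finY])
      show "Ag ` (A - T) \<subseteq> N - X'"
        unfolding X'_def net_nodes_def using BdA by auto
      show "\<forall>v\<in>N - X' - Ag ` (A - T). c Src v = 0"
      proof
        fix v assume v: "v \<in> N - X' - Ag ` (A - T)"
        show "c Src v = 0"
        proof (cases v)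
          case (Ag x)
          then have "x \<notin> A" using v unfolding X'_def by auto
          then show ?thesis using Ag by simp
        qed auto
      qed
    qed
    also have "\<dots> = (\<Sum>a\<in>A - T. c Src (Ag a))"
      by (simp add: sum.reindex inj_on_def)
    also have "\<dots> = (\<Sum>a\<in>A - T. ereal (p * real (card (interior V E \<theta> \<phi> a))))"
      by (rule sum.cong) auto
    finally show ?thesis by simp
  qed
  have row_T: "(\<Sum>v\<in>N - X'. c (Ag a) v) = 0" if "a \<in> T" for a
  proof (rule sum.neutral, rule ballI)
    fix v assume v: "v \<in> N - X'"
    show "c (Ag a) v = 0"
    proof (cases v)
      case (Ag x)
      have "x \<notin> boundary V E \<theta> \<phi> a" using v Ag that unfolding X'_def Bd_def by auto
      then show ?thesis using Ag by simp
    next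
      case Snk then show ?thesis using A_Rs that assms(1) by auto
    qed auto
  qed
  have row_B: "(\<Sum>v\<in>N - X'. c (Ag r) v) = ereal q" if "r \<in> Bd T" for r
  proof -
    have "(\<Sum>v\<in>N - X'. c (Ag r) v) = (\<Sum>v\<in>{Snk}. c (Ag r) v)"
    proof (rule sum.mono_neutral_right[OF finY])
      show "{Snk} \<subseteq> N - X'" unfolding X'_def net_nodes_def by auto
      show "\<forall>v\<in>N - X' - {Snk}. c (Ag r) v = 0"
      proof
        fix v assume v: "v \<in> N - X' - {Snk}"
        show "c (Ag r) v = 0"
          using v BdA[OF that] by (cases v) auto
      qed
    qed
    then show ?thesis using that Bd_Rs[OF assms(1)] by auto
  qed
  have disj: "Ag ` T \<inter> Ag ` Bd T = {}" using BdA assms(1) by auto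
  have "val X' = (\<Sum>v\<in>N - X'. c Src v) + ((\<Sum>u\<in>Ag ` T. \<Sum>v\<in>N - X'. c u v) + (\<Sum>u\<in>Ag ` Bd T. \<Sum>v\<in>N - X'. c u v))"
  proof -
    have "val X' = (\<Sum>u\<in>insert Src (Ag ` T \<union> Ag ` Bd T). \<Sum>v\<in>N - X'. c u v)"
      unfolding val_split X'_def ..
    also have "\<dots> = (\<Sum>v\<in>N - X'. c Src v) + (\<Sum>u\<in>Ag ` T \<union> Ag ` Bd T. \<Sum>v\<in>N - X'. c u v)"
      by (rule sum.insert) (use fT fB in auto)
    also have "(\<Sum>u\<in>Ag ` T \<union> Ag ` Bd T. \<Sum>v\<in>N - X'. c u v) = (\<Sum>u\<in>Ag ` T. \<Sum>v\<in>N - X'. c u v) + (\<Sum>u\<in>Ag ` Bd T. \<Sum>v\<in>N - X'. c u v)"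
      by (rule sum.union_disjoint) (use fT fB disj in auto)
    finally show ?thesis .
  qed
  also have "(\<Sum>u\<in>Ag ` T. \<Sum>v\<in>N - X'. c u v) = (\<Sum>a\<in>T. \<Sum>v\<in>N - X'. c (Ag a) v)"
    by (rule sum.reindex_cong[where l=Ag]) (auto simp: inj_on_def)
  also have "\<dots> = 0" using row_T by simp
  also have "(\<Sum>u\<in>Ag ` Bd T. \<Sum>v\<in>N - X'. c u v) = (\<Sum>r\<in>Bd T. \<Sum>v\<in>N - X'. c (Ag r) v)"
    by (rule sum.reindex_cong[where l=Ag]) (auto simp: inj_on_def)
  also have "\<dots> = (\<Sum>r\<in>Bd T. ereal q)" using row_B by simp
  finally show "val X' = ereal (\<Sum>a\<in>A - T. p * real (card (interior V E \<theta> \<phi> a))) + ereal (q * real (card (Bd T)))"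
    using row_src by (simp add: mult.commute)
qed

end



context net begin

lemma finX: "is_st_cut V E \<theta> \<phi> A X \<Longrightarrow> finite X"
  unfolding is_st_cut_def using finN finite_subset by auto

lemma cut_inf:
  assumes X: "is_st_cut V E \<theta> \<phi> A X" and a: "a \<in> A" "Ag a \<in> X"
    and r: "r \<in> boundary V E \<theta> \<phi> a" "Ag r \<notin> X"
  shows "val X = \<infinity>"
proof -
  have rN: "Ag r \<in> N" using bd_Rs[OF a(1)] r(1) unfolding net_nodes_def by auto
  have "c (Ag a) (Ag r) \<le> (\<Sum>v\<in>N - X. c (Ag a) v)"
    using sum_mono2[of "N - X" "{Ag r}" "c (Ag a)"] finN cap_nn rN r(2) by simp
  also have "\<dots> \<le> val X"
    unfolding val_split using sum_mono2[of X "{Ag a}" "\<lambda>u. \<Sum>v\<in>N - X. c u v"] finX[OF X] row_nn a(2)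
    by simp
  finally have "\<infinity> \<le> val X" using a r(1) by simp
  then show ?thesis by simp
qed

lemma cut_low:
  assumes X: "is_st_cut V E \<theta> \<phi> A X"
  shows "ereal (\<Sum>a\<in>{a\<in>A. Ag a \<notin> X}. p * real (card (interior V E \<theta> \<phi> a))) + ereal (q * real (card {r\<in>Rs. Ag r \<in> X})) \<le> val X"
proof -
  let ?RX = "{r\<in>Rs. Ag r \<in> X}"
  let ?row = "\<lambda>u. \<Sum>v\<in>N - X. c u v"
  have fRX: "finite ?RX" using finRs by simp
  have srcX: "Src \<in> X" "Snk \<notin> X" "X \<subseteq> N" using X unfolding is_st_cut_def by auto
  have h1: "(\<Sum>u\<in>insert Src (Ag ` ?RX). ?row u) \<le> val X"
    unfolding val_split using sum_mono2[of X "insert Src (Ag ` ?RX)" ?row] finX[OF X] row_nn srcX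
    by auto
  have h2: "(\<Sum>u\<in>insert Src (Ag ` ?RX). ?row u) = ?row Src + (\<Sum>u\<in>Ag ` ?RX. ?row u)"
    by (rule sum.insert) (use fRX in auto)
  have h3: "(\<Sum>u\<in>Ag ` ?RX. ?row u) = (\<Sum>r\<in>?RX. ?row (Ag r))"
    by (simp add: sum.reindex inj_on_def)
  have h4: "ereal (q * real (card ?RX)) \<le> (\<Sum>r\<in>?RX. ?row (Ag r))"
  proof -
    have "(\<Sum>r\<in>?RX. ereal q) \<le> (\<Sum>r\<in>?RX. ?row (Ag r))"
    proof (rule sum_mono)
      fix r assume r: "r \<in> ?RX"
      have sN: "Snk \<in> N - X" using srcX unfolding net_nodes_def by auto
      have "c (Ag r) Snk \<le> ?row (Ag r)"
        using sum_mono2[of "N - X" "{Snk}" "c (Ag r)"] finN cap_nn sN by simp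
      then show "ereal q \<le> ?row (Ag r)" using r by simp
    qed
    then show ?thesis by (simp add: mult.commute)
  qed
  have h5: "ereal (\<Sum>a\<in>{a\<in>A. Ag a \<notin> X}. p * real (card (interior V E \<theta> \<phi> a))) \<le> ?row Src"
  proof -
    have sub: "Ag ` {a\<in>A. Ag a \<notin> X} \<subseteq> N - X" unfolding net_nodes_def by auto
    have "(\<Sum>v\<in>Ag ` {a\<in>A. Ag a \<notin> X}. c Src v) \<le> ?row Src"
      using sum_mono2[OF _ sub, of "c Src"] finN cap_nn by simp
    moreover have "(\<Sum>v\<in>Ag ` {a\<in>A. Ag a \<notin> X}. c Src v) = (\<Sum>a\<in>{a\<in>A. Ag a \<notin> X}. c Src (Ag a))"
      by (simp add: sum.reindex inj_on_def)
    moreover have "\<dots> = (\<Sum>a\<in>{a\<in>A. Ag a \<notin> X}. ereal (p * real (card (interior V E \<theta> \<phi> a))))"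
      by (rule sum.cong) auto
    ultimately show ?thesis by simp
  qed
  have "ereal (\<Sum>a\<in>{a\<in>A. Ag a \<notin> X}. p * real (card (interior V E \<theta> \<phi> a))) + ereal (q * real (card ?RX))
     \<le> ?row Src + (\<Sum>r\<in>?RX. ?row (Ag r))"
    by (rule add_mono[OF h5 h4])
  also have "\<dots> \<le> val X" using h1 h2 h3 by simp
  finally show ?thesis .
qed

lemma opt:
  assumes M: "is_min_cut V E \<theta> \<phi> p q A X"
  shows "optimal_seed_set V E \<theta> \<phi> p q {a \<in> A. Ag a \<in> X}"
proof -
  define T where "T = {a \<in> A. Ag a \<in> X}"
  let ?RX = "{r\<in>Rs. Ag r \<in> X}"
  let ?f = "\<lambda>a. p * real (card (interior V E \<theta> \<phi> a))"
  have X: "is_st_cut V E \<theta> \<phi> A X" using M unfolding is_min_cut_def by auto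
  have TA: "T \<subseteq> A" unfolding T_def by auto
  have fT: "finite T" using TA finA finite_subset by auto
  have minX: "val X \<le> val X'" if "is_st_cut V E \<theta> \<phi> A X'" for X'
    using M that unfolding is_min_cut_def by auto
  have fin: "val X \<noteq> \<infinity>"
  proof -
    have "val X \<le> val (insert Src (Ag ` {} \<union> Ag ` Bd {}))"
      using minX cutT(1)[of "{}"] by auto
    also have "\<dots> = ereal (\<Sum>a\<in>A - {}. ?f a) + ereal (q * real (card (Bd {})))"
      using cutT(2)[of "{}"] by auto
    finally show ?thesis by auto
  qed
  have BdRX: "Bd T \<subseteq> ?RX"
  proof
    fix r assume "r \<in> Bd T"
    then obtain a where a: "a \<in> T" "r \<in> boundary V E \<theta> \<phi> a" unfolding Bd_def by auto
    have "Ag r \<in> X"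
    proof (rule ccontr)
      assume "Ag r \<notin> X"
      then have "val X = \<infinity>" using cut_inf[OF X _ _ a(2)] a(1) unfolding T_def by auto
      then show False using fin by simp
    qed
    moreover have "r \<in> Rs" using bd_Rs a TA by auto
    ultimately show "r \<in> ?RX" by simp
  qed
  have cardle: "card (Bd T) \<le> card ?RX"
    by (rule card_mono) (use finRs BdRX in auto)
  have ATeq: "{a\<in>A. Ag a \<notin> X} = A - T" unfolding T_def by auto
  have key: "(\<Sum>a\<in>A - T. ?f a) + q * real (card (Bd T)) \<le> (\<Sum>a\<in>A - T'. ?f a) + q * real (card (Bd T'))"
    if T': "T' \<subseteq> A" for T'
  proof -
    have "ereal ((\<Sum>a\<in>A - T. ?f a) + q * real (card (Bd T))) \<le> ereal ((\<Sum>a\<in>A - T. ?f a) + q * real (card ?RX))"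
      using cardle qp by simp
    also have "\<dots> \<le> val X" using cut_low[OF X] ATeq by simp
    also have "\<dots> \<le> val (insert Src (Ag ` T' \<union> Ag ` Bd T'))"
      using minX cutT(1)[OF T'] by auto
    also have "\<dots> = ereal ((\<Sum>a\<in>A - T'. ?f a) + q * real (card (Bd T')))"
      using cutT(2)[OF T'] by simp
    finally show ?thesis by simp
  qed
  have payle: "payoff V E \<theta> \<phi> p q T' \<le> payoff V E \<theta> \<phi> p q T" if T': "T' \<subseteq> A" for T'
  proof -
    have fT': "finite T'" using T' finA finite_subset by auto
    have "(\<Sum>a\<in>A - T. ?f a) = (\<Sum>a\<in>A. ?f a) - (\<Sum>a\<in>T. ?f a)" by (rule sum_diff[OF finA TA])
    moreover have "(\<Sum>a\<in>A - T'. ?f a) = (\<Sum>a\<in>A. ?f a) - (\<Sum>a\<in>T'. ?f a)" by (rule sum_diff[OF finA T'])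
    ultimately show ?thesis using key[OF T'] payoff_A[OF T'] payoff_A[OF TA]
      by (simp add: sum_distrib_left)
  qed
  have seedT: "seed_set V \<theta> \<phi> T" unfolding seed_set_def using TA A_sub by auto
  show ?thesis unfolding optimal_seed_set_def T_def[symmetric]
  proof (intro conjI allI impI seedT)
    fix S' assume S': "seed_set V \<theta> \<phi> S'"
    show "payoff V E \<theta> \<phi> p q S' \<le> payoff V E \<theta> \<phi> p q T"
      using payoff_rep[OF S'] payle by simp
  qed
qed

end


theorem mainTheorem3:
  fixes V :: "'a set" and E :: "'a \<Rightarrow> 'a \<Rightarrow> bool" and \<theta> :: "'a \<Rightarrow> real"
    and \<phi> p q :: real and A :: "'a set" and X :: "'a fnode set"
  assumes "finite V"
    and "\<And>u v. E u v \<Longrightarrow> u \<in> V \<and> v \<in> V"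
    and "\<And>u v. E u v \<Longrightarrow> E v u"
    and "\<And>i. i \<in> V \<Longrightarrow> 0 \<le> \<theta> i \<and> \<theta> i \<le> 1"
    and "0 \<le> \<phi>" and "\<phi> \<le> 1"
    and "p > 0" and "q > 0"
    and "canonical_reps V E \<theta> \<phi> A"
    and "is_min_cut V E \<theta> \<phi> p q A X"
  shows "optimal_seed_set V E \<theta> \<phi> p q {a \<in> A. Ag a \<in> X}"
proof -
  interpret net V E \<theta> \<phi> p q A
    by (unfold_locales) (use assms in auto)
  show ?thesis by (rule opt[OF assms(10)])
qed

end
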